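(* Suppose Assumptions 1, 2, 3 and 5 hold (but not necessarily Assumption 4), with all expectations finite. For $(g,t)\in\{0,1\}^2$ let $p_{1|gt}=P(D_{gt}=1)$ and $\Delta_{gt}=E\big(Y(1)-Y(0)\mid G=g,T=t,D(0)=1\big)$ (a term multiplied by $p_{1|10}=0$ is taken to be $0$). Then $$W_{DID}=\Delta+\frac{1}{DID_D}\Big((\Delta_{11}-\Delta_{10})\,p_{1|10}-(\Delta_{01}-\Delta_{00})\,p_{1|00}\Big).$$
   Context: Standing framework. Let $(Y(0),Y(1),V,G,T)$ be random variables on a common probability space, with $G\in\{0,1\}$ (group; $G=1$ is the "treatment group"), $T\in\{0,1\}$ (period), $V$ real-valued, and let $(v_{gt})_{(g,t)\in\{0,1\}^2}$ be real constants. The treatment is $D=1\{V\geq v_{GT}\}$ and the potential treatments are $D(t)=1\{V\geq v_{Gt}\}$, $t\in\{0,1\}$, so that $D=D(T)$. The observed outcome is $Y=DY(1)+(1-D)Y(0)$. For any random variable $R$, $R_{gt}$ denotes a random variable distributed as $R$ conditional on $\{G=g,T=t\}$ and $R_{dgt}$ one distributed as $R$ conditional on $\{D=d,G=g,T=t\}$. Let $S=\{D(0)<D(1),\,G=1\}$ and $\Delta=E(Y(1)-Y(0)\mid S,T=1)$. Assumption 1: $D=1\{V\geq v_{GT}\}$ with $V$ independent of $T$ conditional on $G$. Assumption 2: $E(D_{11})>E(D_{10})$ and $E(D_{11})-E(D_{10})>E(D_{01})-E(D_{00})$. Assumption 3: $E(Y(0)\mid G,T=1)-E(Y(0)\mid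 G,T=0)$ does not depend on $G$. Assumption 5: $0<E(D_{01})=E(D_{00})<1$. For any random variable $R$, $DID_R=E(R_{11})-E(R_{10})-\big(E(R_{01})-E(R_{00})\big)$, and $W_{DID}=DID_Y/DID_D$. *)

theory Defs
  imports "HOL-Probability.Probability"
begin

text \<open>Elementary conditional expectation given an event:
  E(R | A) = E(R 1_A) / P(A). (Division by zero yields 0 in Isabelle.)\<close>
definition cexp :: "'a measure \<Rightarrow> ('a \<Rightarrow> real) \<Rightarrow> 'a set \<Rightarrow> real" where
  "cexp M R A = (\<integral>x. indicator A x * R x \<partial>M) / measure M A"

definition cell :: "'a measure \<Rightarrow> ('a \<Rightarrow> nat) \<Rightarrow> ('a \<Rightarrow> nat) \<Rightarrow> nat \<Rightarrow> nat \<Rightarrow> 'a set" where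
  "cell M G T g t = {\<omega> \<in> space M. G \<omega> = g \<and> T \<omega> = t}"

definition Dtreat :: "(nat \<Rightarrow> nat \<Rightarrow> real) \<Rightarrow> ('a \<Rightarrow> real) \<Rightarrow> ('a \<Rightarrow> nat) \<Rightarrow> ('a \<Rightarrow> nat) \<Rightarrow> 'a \<Rightarrow> real" where
  "Dtreat v V G T \<omega> = (if V \<omega> \<ge> v (G \<omega>) (T \<omega>) then 1 else 0)"

definition Dpot :: "(nat \<Rightarrow> nat \<Rightarrow> real) \<Rightarrow> ('a \<Rightarrow> real) \<Rightarrow> ('a \<Rightarrow> nat) \<Rightarrow> nat \<Rightarrow> 'a \<Rightarrow> real" where
  "Dpot v V G t \<omega> = (if V \<omega> \<ge> v (G \<omega>) t then 1 else 0)"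

definition Yobs :: "(nat \<Rightarrow> nat \<Rightarrow> real) \<Rightarrow> ('a \<Rightarrow> real) \<Rightarrow> ('a \<Rightarrow> nat) \<Rightarrow> ('a \<Rightarrow> nat)
    \<Rightarrow> ('a \<Rightarrow> real) \<Rightarrow> ('a \<Rightarrow> real) \<Rightarrow> 'a \<Rightarrow> real" where
  "Yobs v V G T Y0 Y1 \<omega> = Dtreat v V G T \<omega> * Y1 \<omega> + (1 - Dtreat v V G T \<omega>) * Y0 \<omega>"

definition DID :: "'a measure \<Rightarrow> ('a \<Rightarrow> nat) \<Rightarrow> ('a \<Rightarrow> nat) \<Rightarrow> ('a \<Rightarrow> real) \<Rightarrow> real" where
  "DID M G T R = cexp M R (cell M G T 1 1) - cexp M R (cell M G T 1 0)
     - (cexp M R (cell M G T 0 1) - cexp M R (cell M G T 0 0))"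

text \<open>Assumption 1 (independence part): V independent of T conditional on G
  (G, T discrete with values in {0,1}).\<close>
definition cond_indep_V_T :: "'a measure \<Rightarrow> ('a \<Rightarrow> real) \<Rightarrow> ('a \<Rightarrow> nat) \<Rightarrow> ('a \<Rightarrow> nat) \<Rightarrow> bool" where
  "cond_indep_V_T M V G T \<longleftrightarrow>
    (\<forall>g\<in>{0,1}. \<forall>t\<in>{0,1}. \<forall>B\<in>sets borel.
       measure M ({\<omega> \<in> space M. V \<omega> \<in> B} \<inter> cell M G T g t) * measure M {\<omega> \<in> space M. G \<omega> = g}
     = measure M {\<omega> \<in> space M. V \<omega> \<in> B \<and> G \<omega> = g} * measure M (cell M G T g t))"

end

theory Submission
  imports Defs
begin

definition II :: "'a measure \<Rightarrow> ('a \<Rightarrow> real) \<Rightarrow> 'a set \<Rightarrow> real" where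
  "II M f A = (\<integral>x. indicator A x * f x \<partial>M)"

lemma integrable_ind: "A \<in> sets M \<Longrightarrow> integrable M (X::_\<Rightarrow>real) \<Longrightarrow> integrable M (\<lambda>x. indicator A x * X x)"
  using integrable_real_mult_indicator[of A M X] by (simp add: mult.commute)

lemma II_add:
  assumes "A \<in> sets M" "B \<in> sets M" "A \<inter> B = {}" "integrable M X"
  shows "II M X (A \<union> B) = II M X A + II M X B"
proof -
  have "II M X (A\<union>B) = (\<integral>x. indicator A x * X x + indicator B x * X x \<partial>M)"
    unfolding II_def by (rule Bochner_Integration.integral_cong) (use assms(3) in \<open>auto simp: indicator_def\<close>)
  also have "\<dots> = II M X A + II M X B" unfolding II_def
    by (rule Bochner_Integration.integral_add) (use assms in \<open>auto intro: integrable_ind\<close>)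
  finally show ?thesis .
qed

lemma II_null:
  assumes "finite_measure M" "A \<in> sets M" "measure M A = 0"
  shows "II M X A = 0"
proof -
  have "A \<in> null_sets M" using assms by (simp add: null_sets_def finite_measure.emeasure_eq_measure)
  from AE_not_in[OF this] have "AE x in M. indicator A x * X x = 0"
    by eventually_elim auto
  then show ?thesis unfolding II_def by (rule integral_eq_zero_AE)
qed

lemma II_cexp:
  assumes "finite_measure M" "A \<in> sets M"
  shows "measure M A * cexp M X A = II M X A"
  using II_null[OF assms, of X] unfolding cexp_def II_def by (cases "measure M A = 0") auto

lemma cexp_II: "cexp M X A = II M X A / measure M A"
  unfolding cexp_def II_def ..


theorem mainTheorem2:
  fixes M :: "'a measure" and Y0 Y1 V :: "'a \<Rightarrow> real" and G T :: "'a \<Rightarrow> nat"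
    and v :: "nat \<Rightarrow> nat \<Rightarrow> real"
  assumes M: "prob_space M"
    and Y0_int: "integrable M Y0" and Y1_int: "integrable M Y1"
    and V_meas: "V \<in> borel_measurable M"
    and G_meas: "G \<in> measurable M (count_space UNIV)"
    and T_meas: "T \<in> measurable M (count_space UNIV)"
    and G_vals: "\<forall>\<omega>\<in>space M. G \<omega> \<in> {0,1}"
    and T_vals: "\<forall>\<omega>\<in>space M. T \<omega> \<in> {0,1}"
    and cells_pos: "\<forall>g\<in>{0,1}. \<forall>t\<in>{0,1}. measure M (cell M G T g t) > 0"
    \<comment> \<open>Assumption 1\<close>
    and A1: "cond_indep_V_T M V G T"
    \<comment> \<open>Assumption 2\<close>
    and A2a: "cexp M (Dtreat v V G T) (cell M G T 1 1) > cexp M (Dtreat v V G T) (cell M G T 1 0)"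
    and A2b: "cexp M (Dtreat v V G T) (cell M G T 1 1) - cexp M (Dtreat v V G T) (cell M G T 1 0)
              > cexp M (Dtreat v V G T) (cell M G T 0 1) - cexp M (Dtreat v V G T) (cell M G T 0 0)"
    \<comment> \<open>Assumption 3\<close>
    and A3: "cexp M Y0 (cell M G T 1 1) - cexp M Y0 (cell M G T 1 0)
             = cexp M Y0 (cell M G T 0 1) - cexp M Y0 (cell M G T 0 0)"
    \<comment> \<open>Assumption 5\<close>
    and A5a: "0 < cexp M (Dtreat v V G T) (cell M G T 0 1)"
    and A5b: "cexp M (Dtreat v V G T) (cell M G T 0 1) = cexp M (Dtreat v V G T) (cell M G T 0 0)"
    and A5c: "cexp M (Dtreat v V G T) (cell M G T 0 1) < 1"
  shows
    "(let D = Dtreat v V G T;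
          Y = Yobs v V G T Y0 Y1;
          S = {\<omega> \<in> space M. Dpot v V G 0 \<omega> < Dpot v V G 1 \<omega> \<and> G \<omega> = 1};
          \<Delta> = cexp M (\<lambda>\<omega>. Y1 \<omega> - Y0 \<omega>) (S \<inter> {\<omega> \<in> space M. T \<omega> = 1});
          p = (\<lambda>g t. cexp M D (cell M G T g t));
          \<Delta>c = (\<lambda>g t. cexp M (\<lambda>\<omega>. Y1 \<omega> - Y0 \<omega>)
                    (cell M G T g t \<inter> {\<omega> \<in> space M. Dpot v V G 0 \<omega> = 1}))
      in DID M G T Y / DID M G T D
         = \<Delta> + (1 / DID M G T D) * ((\<Delta>c 1 1 - \<Delta>c 1 0) * p 1 0 - (\<Delta>c 0 1 - \<Delta>c 0 0) * p 0 0))"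
proof -
  interpret prob_space M by (rule M)
  have fm: "finite_measure M" by (rule finite_measure_axioms)
  note [measurable] = G_meas T_meas V_meas
  define c where "c = (\<lambda>g t. cell M G T g t)"
  define Q where "Q = (\<lambda>g s. {\<omega>\<in>space M. v g s \<le> V \<omega>})"
  define X where "X = (\<lambda>\<omega>. Y1 \<omega> - Y0 \<omega>)"
  define r where "r = (\<lambda>g s. measure M {\<omega>\<in>space M. v g s \<le> V \<omega> \<and> G \<omega> = g} / measure M {\<omega>\<in>space M. G \<omega> = g})"
  define a where "a = (\<lambda>g t. measure M (c g t))"
  have cc: "cell M G T = c" unfolding c_def by simp
  have c_sets[measurable]: "c g t \<in> sets M" for g t unfolding c_def cell_def by measurable
  have Q_sets[measurable]: "Q g s \<in> sets M" for g s unfolding Q_def by measurable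
  have c_sp: "c g t \<subseteq> space M" for g t unfolding c_def cell_def by auto
  have Xint: "integrable M X" unfolding X_def using Y0_int Y1_int by auto
  have apos: "a g t > 0" if "g\<in>{0,1}" "t\<in>{0,1}" for g t
    using cells_pos that unfolding a_def c_def by auto
  have pD: "cexp M (Dtreat v V G T) (c g t) = measure M (c g t \<inter> Q g t) / a g t" for g t
  proof -
    have "(\<integral>x. indicator (c g t) x * Dtreat v V G T x \<partial>M) = (\<integral>x. indicator (c g t \<inter> Q g t) x \<partial>M)"
      by (rule Bochner_Integration.integral_cong) (auto simp: indicator_def c_def cell_def Q_def Dtreat_def)
    also have "\<dots> = measure M (c g t \<inter> Q g t)" using c_sp[of g t] by (simp add: Int_absorb2 inf.coboundedI1)
    finally show ?thesis unfolding cexp_def a_def by simp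
  qed
  have ind: "measure M (c g t \<inter> Q g s) = r g s * a g t" if "g\<in>{0,1}" "t\<in>{0,1}" for g t s
  proof -
    have "{v g s..} \<in> sets borel" by simp
    with A1 that have e: "measure M ({\<omega> \<in> space M. V \<omega> \<in> {v g s..}} \<inter> cell M G T g t) * measure M {\<omega> \<in> space M. G \<omega> = g}
       = measure M {\<omega> \<in> space M. V \<omega> \<in> {v g s..} \<and> G \<omega> = g} * measure M (cell M G T g t)"
      unfolding cond_indep_V_T_def by blast
    have s1: "{\<omega> \<in> space M. V \<omega> \<in> {v g s..}} \<inter> cell M G T g t = c g t \<inter> Q g s"
      unfolding c_def Q_def cell_def by auto
    have s2: "{\<omega> \<in> space M. V \<omega> \<in> {v g s..} \<and> G \<omega> = g} = {\<omega>\<in>space M. v g s \<le> V \<omega> \<and> G \<omega> = g}" by auto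
    have "a g t \<le> measure M {\<omega> \<in> space M. G \<omega> = g}"
      unfolding a_def c_def cell_def by (rule finite_measure_mono) auto
    with apos[OF that] have pg: "measure M {\<omega> \<in> space M. G \<omega> = g} > 0" by linarith
    from e[unfolded s1 s2] pg show ?thesis unfolding r_def a_def c_def[symmetric]
      by (simp add: field_simps)
  qed
  have pr: "cexp M (Dtreat v V G T) (c g t) = r g t" if "g\<in>{0,1}" "t\<in>{0,1}" for g t
    using pD[of g t] ind[OF that, of t] apos[OF that] by simp
  have Dc_set: "cell M G T g t \<inter> {\<omega>\<in>space M. Dpot v V G 0 \<omega> = 1} = c g t \<inter> Q g 0" for g t
    by (auto simp: c_def cell_def Q_def Dpot_def split: if_splits)
  define Dc where "Dc = (\<lambda>g t. cexp M X (c g t \<inter> Q g 0))"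
  have key: "r g 0 * Dc g t * a g t = II M X (c g t \<inter> Q g 0)" if "g\<in>{0,1}" "t\<in>{0,1}" for g t
    using II_cexp[OF fm, of "c g t \<inter> Q g 0" X] ind[OF that, of 0] unfolding Dc_def
    by (simp add: mult_ac)
  have Ycell: "II M (Yobs v V G T Y0 Y1) (c g t) = II M Y0 (c g t) + II M X (c g t \<inter> Q g t)" for g t
  proof -
    have "II M (Yobs v V G T Y0 Y1) (c g t) = (\<integral>x. indicator (c g t) x * Y0 x + indicator (c g t \<inter> Q g t) x * X x \<partial>M)"
      unfolding II_def
      by (rule Bochner_Integration.integral_cong)
        (auto simp: indicator_def c_def cell_def Q_def Dtreat_def Yobs_def X_def algebra_simps)
    also have "\<dots> = II M Y0 (c g t) + II M X (c g t \<inter> Q g t)" unfolding II_def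
      by (rule Bochner_Integration.integral_add) (use Y0_int Xint in \<open>auto intro: integrable_ind\<close>)
    finally show ?thesis .
  qed
  have cY: "cexp M (Yobs v V G T Y0 Y1) (c g t) = cexp M Y0 (c g t) + II M X (c g t \<inter> Q g t) / a g t" for g t
    unfolding cexp_II a_def Ycell by (simp add: add_divide_distrib)
  have mono1: "v 1 1 \<le> v 1 0"
  proof (rule ccontr)
    assume "\<not> ?thesis"
    then have "Q 1 1 \<subseteq> Q 1 0" unfolding Q_def by auto
    then have "measure M (c 1 1 \<inter> Q 1 1) \<le> measure M (c 1 1 \<inter> Q 1 0)"
      by (intro finite_measure_mono) auto
    then have "measure M (c 1 1 \<inter> Q 1 1) / a 1 1 \<le> measure M (c 1 1 \<inter> Q 1 0) / a 1 1"
      using apos[of 1 1] by (simp add: divide_right_mono)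
    then have "cexp M (Dtreat v V G T) (c 1 1) \<le> r 1 0"
      using pD[of 1 1] ind[of 1 1 0] apos[of 1 1] by simp
    with A2a pr[of 1 0] show False unfolding cc by simp
  qed
  define S1 where "S1 = {\<omega> \<in> space M. Dpot v V G 0 \<omega> < Dpot v V G 1 \<omega> \<and> G \<omega> = 1} \<inter> {\<omega> \<in> space M. T \<omega> = 1}"
  have S1_eq: "S1 = c 1 1 \<inter> Q 1 1 - Q 1 0"
    by (auto simp: S1_def c_def cell_def Q_def Dpot_def split: if_splits)
  have S1_sets[measurable]: "S1 \<in> sets M" unfolding S1_eq by measurable
  have un1: "c 1 1 \<inter> Q 1 1 = (c 1 1 \<inter> Q 1 0) \<union> S1" and dj1: "(c 1 1 \<inter> Q 1 0) \<inter> S1 = {}"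
    using mono1 unfolding S1_eq Q_def by auto
  have J11: "II M X (c 1 1 \<inter> Q 1 1) = II M X (c 1 1 \<inter> Q 1 0) + II M X S1"
    unfolding un1 by (rule II_add) (use dj1 Xint in auto)
  have PS1: "measure M S1 = (r 1 1 - r 1 0) * a 1 1"
    using finite_measure_Union[of "c 1 1 \<inter> Q 1 0" S1] dj1 un1 ind[of 1 1 1] ind[of 1 1 0]
    by (simp add: algebra_simps)
  have DS1: "cexp M X S1 * measure M S1 = II M X S1"
    using II_cexp[OF fm S1_sets, of X] by (simp add: mult_ac)
  have J01: "II M X (c 0 1 \<inter> Q 0 1) = II M X (c 0 1 \<inter> Q 0 0)"
  proof -
    have eqm: "measure M (c 0 1 \<inter> Q 0 1) = measure M (c 0 1 \<inter> Q 0 0)"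
      using ind[of 0 1 1] ind[of 0 1 0] pr[of 0 1] pr[of 0 0] A5b unfolding cc by simp
    show ?thesis
    proof (cases "v 0 1 \<le> v 0 0")
      case True
      then have u: "c 0 1 \<inter> Q 0 1 = (c 0 1 \<inter> Q 0 0) \<union> (c 0 1 \<inter> Q 0 1 - Q 0 0)" unfolding Q_def by auto
      have m0: "measure M (c 0 1 \<inter> Q 0 1 - Q 0 0) = 0"
        using finite_measure_Union[of "c 0 1 \<inter> Q 0 0" "c 0 1 \<inter> Q 0 1 - Q 0 0"] u eqm by auto
      have "II M X (c 0 1 \<inter> Q 0 1) = II M X (c 0 1 \<inter> Q 0 0) + II M X (c 0 1 \<inter> Q 0 1 - Q 0 0)"
        by (subst u, rule II_add) (use Xint in auto)
      with II_null[OF fm _ m0] show ?thesis by simp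
    next
      case False
      then have u: "c 0 1 \<inter> Q 0 0 = (c 0 1 \<inter> Q 0 1) \<union> (c 0 1 \<inter> Q 0 0 - Q 0 1)" unfolding Q_def by auto
      have m0: "measure M (c 0 1 \<inter> Q 0 0 - Q 0 1) = 0"
        using finite_measure_Union[of "c 0 1 \<inter> Q 0 1" "c 0 1 \<inter> Q 0 0 - Q 0 1"] u eqm by auto
      have "II M X (c 0 1 \<inter> Q 0 0) = II M X (c 0 1 \<inter> Q 0 1) + II M X (c 0 1 \<inter> Q 0 0 - Q 0 1)"
        by (subst u, rule II_add) (use Xint in auto)
      with II_null[OF fm _ m0] show ?thesis by simp
    qed
  qed
  have k11: "II M X (c 1 1 \<inter> Q 1 0) = r 1 0 * Dc 1 1 * a 1 1" using key[of 1 1] by simp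
  have k10: "II M X (c 1 0 \<inter> Q 1 0) = r 1 0 * Dc 1 0 * a 1 0" using key[of 1 0] by simp
  have k01: "II M X (c 0 1 \<inter> Q 0 0) = r 0 0 * Dc 0 1 * a 0 1" using key[of 0 1] by simp
  have k00: "II M X (c 0 0 \<inter> Q 0 0) = r 0 0 * Dc 0 0 * a 0 0" using key[of 0 0] by simp
  have a11: "a 1 1 > 0" and a10: "a 1 0 > 0" and a01: "a 0 1 > 0" and a00: "a 0 0 > 0" using apos by auto
  have p11: "cexp M (Dtreat v V G T) (c 1 1) = r 1 1" and p10: "cexp M (Dtreat v V G T) (c 1 0) = r 1 0"
    and p01: "cexp M (Dtreat v V G T) (c 0 1) = r 0 1" and p00: "cexp M (Dtreat v V G T) (c 0 0) = r 0 0"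
    using pr by auto
  have r01: "r 0 1 = r 0 0" using A5b p01 p00 unfolding cc by simp
  have dpos: "r 1 1 - r 1 0 > 0" using A2a p11 p10 unfolding cc by simp
  have DIDD: "DID M G T (Dtreat v V G T) = r 1 1 - r 1 0"
    unfolding DID_def cc p11 p10 p01 p00 r01 by simp
  have DIDY: "DID M G T (Yobs v V G T Y0 Y1) = cexp M X S1 * (r 1 1 - r 1 0) + r 1 0 * (Dc 1 1 - Dc 1 0) - r 0 0 * (Dc 0 1 - Dc 0 0)"
  proof -
    have "DID M G T (Yobs v V G T Y0 Y1) = II M X (c 1 1 \<inter> Q 1 1) / a 1 1 - II M X (c 1 0 \<inter> Q 1 0) / a 1 0
       - (II M X (c 0 1 \<inter> Q 0 1) / a 0 1 - II M X (c 0 0 \<inter> Q 0 0) / a 0 0)"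
      unfolding DID_def cc cY using A3 unfolding cc by simp
    also have "\<dots> = cexp M X S1 * (r 1 1 - r 1 0) + r 1 0 * (Dc 1 1 - Dc 1 0) - r 0 0 * (Dc 0 1 - Dc 0 0)"
      unfolding J11 J01 k11 k10 k01 k00 DS1[symmetric] PS1 using a11 a10 a01 a00
      by (simp add: field_simps)
    finally show ?thesis .
  qed
  have Sset: "{\<omega> \<in> space M. Dpot v V G 0 \<omega> < Dpot v V G 1 \<omega> \<and> G \<omega> = 1} \<inter> {\<omega> \<in> space M. T \<omega> = 1} = S1"
    unfolding S1_def ..
  show ?thesis
    unfolding Let_def Dc_set Sset DIDD DIDY
    unfolding cc X_def[symmetric] p11 p10 p01 p00 using dpos
    by (simp add: field_simps Dc_def)
qed

end
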